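(* Let $\mathcal{K}\subseteq\wp(\mathcal{G})$ be coherent. For finitely many $A_1,\ldots,A_n\in\mathcal{K}$ ($n\ge1$) let $\mathbb{D}_{\{A_1,\ldots,A_n\}}$ be the set of all coherent $D\subseteq\mathcal{G}$ for which there is $\langle g_1,\ldots,g_n\rangle\in A_1\times\cdots\times A_n$ with $0\notin\mathcal{E}(\{g_1,\ldots,g_n\})$ and $D\supseteq\mathcal{E}(\{g_1,\ldots,g_n\})$, and let $\mathfrak{D}_{\mathcal{K}}:=\{\mathbb{D}_{\{A_1,\ldots,A_n\}}: n\ge1,\ A_1,\ldots,A_n\in\mathcal{K}\}$. Then: $\mathfrak{D}_{\mathcal{K}}$ is non-empty; each of its members is a non-empty set of coherent sets of desirable gambles; $\mathbb{D}_{\{A^1_1,\ldots,A^1_{n_1},A^2_1,\ldots,A^2_{n_2}\}}\subseteq\mathbb{D}_{\{A^1_1,\ldots,A^1_{n_1}\}}\cap\mathbb{D}_{\{A^2_1,\ldots,A^2_{n_2}\}}$ (so $\mathfrak{D}_{\mathcal{K}}$ is downwards closed); and $\mathcal{K}=\mathcal{K}_{\mathfrak{D}_{\mathcal{K}}}$.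
   Context: $\Omega$ is a non-empty set and $\mathcal{G}$ is the set of bounded functions $\Omega\to\mathbb{R}$. $f\geq g$ means pointwise $\geq$; $f\gneq g$ means $f\geq g$ and $f\neq g$; $\mathcal{G}_{\gneq 0}=\{f: f\gneq 0\}$. $\mathrm{posi}(B)=\{\sum_{i=1}^m\lambda_i h_i: m\geq1,\lambda_i>0,h_i\in B\}$, and $\mathcal{E}(E):=\mathrm{posi}(E\cup\mathcal{G}_{\gneq 0})$. A set $D\subseteq\mathcal{G}$ is coherent if $0\notin D$; $\mathcal{G}_{\gneq0}\subseteq D$; $\lambda g\in D$ whenever $g\in D,\lambda>0$; and $f+g\in D$ whenever $f,g\in D$. A set $\mathcal{K}\subseteq\wp(\mathcal{G})$ is coherent if: (K$_\emptyset$) $\emptyset\notin\mathcal{K}$; (K$_0$) if $A\in\mathcal{K}$ then $A\setminus\{0\}\in\mathcal{K}$; (K$_{\gneq0}$) if $g\in\mathcal{G}_{\gneq0}$ then $\{g\}\in\mathcal{K}$; (K$_\supseteq$) if $A\in\mathcal{K}$ and $B\supseteq A$ then $B\in\mathcal{K}$; (K$_{\mathrm{Dom}}$) if $A\in\mathcal{K}$ and for each $g\in A$, $f_g$ is a gamble with $f_g\geq g$, then $\{f_g: g\in A\}\in\mathcal{K}$; (K$_{\mathrm{Add}}$) if $A_1,\ldots,A_n\in\mathcal{K}$ (finitely many) and for each $\langle g_1,\ldots,g_n\rangle\in A_1\times\cdots\times A_n$, $f_{\langle g_1,\ldots,g_n\rangle}$ is some member of $\mathrm{posi}(\{g_1,\ldots,g_n\})$,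 then $\{f_{\langle g_1,\ldots,g_n\rangle}\}\in\mathcal{K}$ (the set of all these). A set $\mathfrak{D}$ of sets of coherent $D$'s is downwards closed if for all $\mathbb{D}_1,\mathbb{D}_2\in\mathfrak{D}$ there is $\mathbb{D}\in\mathfrak{D}$ with $\mathbb{D}\subseteq\mathbb{D}_1\cap\mathbb{D}_2$. For such $\mathfrak{D}$, $\mathcal{K}_{\mathfrak{D}}:=\{B\subseteq\mathcal{G}:\exists\mathbb{D}\in\mathfrak{D}\ \forall D\in\mathbb{D},\ B\cap D\neq\emptyset\}$. *)

theory Defs
  imports Complex_Main "HOL-Library.FuncSet"
begin

definition gamble :: "('a \<Rightarrow> real) \<Rightarrow> bool" where
  "gamble f \<longleftrightarrow> (\<exists>B. \<forall>x. \<bar>f x\<bar> \<le> B)"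

definition gambles :: "('a \<Rightarrow> real) set" where
  "gambles = {f. gamble f}"

definition gneq0 :: "('a \<Rightarrow> real) set" where
  "gneq0 = {f. gamble f \<and> (\<forall>x. f x \<ge> 0) \<and> f \<noteq> (\<lambda>x. 0)}"

definition posi :: "('a \<Rightarrow> real) set \<Rightarrow> ('a \<Rightarrow> real) set" where
  "posi B = {f. \<exists>m::nat. m \<ge> 1 \<and> (\<exists>lam h. (\<forall>i<m. lam i > (0::real) \<and> h i \<in> B)
                 \<and> f = (\<lambda>x. \<Sum>i<m. lam i * h i x))}"

definition Ext :: "('a \<Rightarrow> real) set \<Rightarrow> ('a \<Rightarrow> real) set" where
  "Ext E = posi (E \<union> gneq0)"

definition coherent_D :: "('a \<Rightarrow> real) set \<Rightarrow> bool" where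
  "coherent_D D \<longleftrightarrow> D \<subseteq> gambles \<and> (\<lambda>x. 0) \<notin> D \<and> gneq0 \<subseteq> D
     \<and> (\<forall>g\<in>D. \<forall>lam::real. lam > 0 \<longrightarrow> (\<lambda>x. lam * g x) \<in> D)
     \<and> (\<forall>f\<in>D. \<forall>g\<in>D. (\<lambda>x. f x + g x) \<in> D)"

text \<open>Coherent sets of desirable gamble sets. Finite families A_1..A_n are indexed by
  i < n; tuples in A_1 x ... x A_n are extensional functions in PiE {..<n} A.\<close>
definition coherent_K :: "('a \<Rightarrow> real) set set \<Rightarrow> bool" where
  "coherent_K K \<longleftrightarrow>
     K \<subseteq> Pow gambles
   \<and> {} \<notin> K
   \<and> (\<forall>A\<in>K. A - {\<lambda>x. 0} \<in> K)
   \<and> (\<forall>g\<in>gneq0. {g} \<in> K)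
   \<and> (\<forall>A\<in>K. \<forall>B. A \<subseteq> B \<and> B \<subseteq> gambles \<longrightarrow> B \<in> K)
   \<and> (\<forall>A\<in>K. \<forall>f. (\<forall>g\<in>A. gamble (f g) \<and> (\<forall>x. f g x \<ge> g x)) \<longrightarrow> f ` A \<in> K)
   \<and> (\<forall>n::nat. \<forall>As::nat \<Rightarrow> ('a \<Rightarrow> real) set. \<forall>F.
        n \<ge> 1 \<and> (\<forall>i<n. As i \<in> K)
        \<and> (\<forall>g\<in>PiE {..<n} As. F g \<in> posi (g ` {..<n}))
        \<longrightarrow> F ` (PiE {..<n} As) \<in> K)"

definition DD :: "nat \<Rightarrow> (nat \<Rightarrow> ('a \<Rightarrow> real) set) \<Rightarrow> ('a \<Rightarrow> real) set set" where
  "DD n As = {D. coherent_D D \<and> (\<exists>g\<in>PiE {..<n} As.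
       (\<lambda>x. 0) \<notin> Ext (g ` {..<n}) \<and> Ext (g ` {..<n}) \<subseteq> D)}"

definition frakD :: "('a \<Rightarrow> real) set set \<Rightarrow> ('a \<Rightarrow> real) set set set" where
  "frakD K = {DD n As | n As. n \<ge> 1 \<and> (\<forall>i<n. As i \<in> K)}"

definition downwards_closed :: "('a \<Rightarrow> real) set set set \<Rightarrow> bool" where
  "downwards_closed FD \<longleftrightarrow> (\<forall>D1\<in>FD. \<forall>D2\<in>FD. \<exists>D\<in>FD. D \<subseteq> D1 \<inter> D2)"

definition K_of :: "('a \<Rightarrow> real) set set set \<Rightarrow> ('a \<Rightarrow> real) set set" where
  "K_of FD = {B. B \<subseteq> gambles \<and> (\<exists>DS\<in>FD. \<forall>D\<in>DS. B \<inter> D \<noteq> {})}"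

definition concat_fam :: "nat \<Rightarrow> (nat \<Rightarrow> 'b set) \<Rightarrow> (nat \<Rightarrow> 'b set) \<Rightarrow> (nat \<Rightarrow> 'b set)" where
  "concat_fam n1 A1 A2 = (\<lambda>i. if i < n1 then A1 i else A2 (i - n1))"

end

theory Submission
  imports Defs
begin

lemma gamble_add: "gamble f \<Longrightarrow> gamble g \<Longrightarrow> gamble (\<lambda>x. f x + g x)"
  unfolding gamble_def
proof -
  assume "\<exists>B. \<forall>x. \<bar>f x\<bar> \<le> B" "\<exists>B. \<forall>x. \<bar>g x\<bar> \<le> B"
  then obtain B1 B2 where "\<forall>x. \<bar>f x\<bar> \<le> B1" "\<forall>x. \<bar>g x\<bar> \<le> B2" by blast
  then have "\<forall>x. \<bar>f x + g x\<bar> \<le> B1 + B2" by (metis abs_triangle_ineq add_mono order_trans)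
  then show "\<exists>B. \<forall>x. \<bar>f x + g x\<bar> \<le> B" by blast
qed

lemma gamble_scale: "gamble f \<Longrightarrow> gamble (\<lambda>x. c * f x)"
  unfolding gamble_def
proof -
  assume "\<exists>B. \<forall>x. \<bar>f x\<bar> \<le> B"
  then obtain B where B: "\<forall>x. \<bar>f x\<bar> \<le> B" by blast
  have "\<forall>x. \<bar>c * f x\<bar> \<le> \<bar>c\<bar> * B"
    using B by (simp add: abs_mult mult_left_mono)
  then show "\<exists>B. \<forall>x. \<bar>c * f x\<bar> \<le> B" by blast
qed

lemma gamble_zero: "gamble (\<lambda>x. 0)" unfolding gamble_def by auto

lemma gamble_sum: "finite S \<Longrightarrow> (\<forall>i\<in>S. gamble (h i)) \<Longrightarrow> gamble (\<lambda>x. \<Sum>i\<in>S. c i * h i x)"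
proof (induction S rule: finite_induct)
  case empty then show ?case by (simp add: gamble_zero)
next
  case (insert a F)
  then show ?case using gamble_add[OF gamble_scale[of "h a" "c a"], of "\<lambda>x. \<Sum>i\<in>F. c i * h i x"]
    by simp
qed

lemma posi_iff: "f \<in> posi B \<longleftrightarrow> (\<exists>S::nat set. finite S \<and> S \<noteq> {} \<and> (\<exists>lam h. (\<forall>i\<in>S. lam i > (0::real) \<and> h i \<in> B)
   \<and> f = (\<lambda>x. \<Sum>i\<in>S. lam i * h i x)))"
proof
  assume "f \<in> posi B"
  then obtain m :: nat and lam h where "m \<ge> 1" "\<forall>i<m. lam i > (0::real) \<and> h i \<in> B" "f = (\<lambda>x. \<Sum>i<m. lam i * h i x)"
    unfolding posi_def by blast
  then show "\<exists>S::nat set. finite S \<and> S \<noteq> {} \<and> (\<exists>lam h. (\<forall>i\<in>S. lam i > (0::real) \<and> h i \<in> B)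
   \<and> f = (\<lambda>x. \<Sum>i\<in>S. lam i * h i x))"
  proof (intro exI[of _ "{..<m}"] conjI exI[of _ lam] exI[of _ h])
    show "finite {..<m}" by simp
    show "{..<m} \<noteq> {}" using \<open>m \<ge> 1\<close> by (simp add: lessThan_empty_iff)
    show "\<forall>i\<in>{..<m}. lam i > 0 \<and> h i \<in> B" using \<open>\<forall>i<m. lam i > (0::real) \<and> h i \<in> B\<close> by simp
    show "f = (\<lambda>x. \<Sum>i\<in>{..<m}. lam i * h i x)" by fact
  qed
next
  assume "\<exists>S::nat set. finite S \<and> S \<noteq> {} \<and> (\<exists>lam h. (\<forall>i\<in>S. lam i > (0::real) \<and> h i \<in> B)
   \<and> f = (\<lambda>x. \<Sum>i\<in>S. lam i * h i x))"
  then obtain S :: "nat set" and lam h where S: "finite S" "S \<noteq> {}" "\<forall>i\<in>S. lam i > (0::real) \<and> h i \<in> B"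
    "f = (\<lambda>x. \<Sum>i\<in>S. lam i * h i x)" by blast
  obtain b where b: "bij_betw b {0..<card S} S" using ex_bij_betw_nat_finite[OF S(1)] by blast
  have m: "card S \<ge> 1" using S by (simp add: Suc_le_eq card_gt_0_iff)
  have bi: "b i \<in> S" if "i < card S" for i using b that by (auto simp: bij_betw_def)
  have p: "\<forall>i<card S. lam (b i) > 0 \<and> h (b i) \<in> B" using bi S(3) by blast
  have e: "f = (\<lambda>x. \<Sum>i<card S. lam (b i) * h (b i) x)"
  proof
    fix x
    have "(\<Sum>i\<in>{0..<card S}. lam (b i) * h (b i) x) = (\<Sum>i\<in>S. lam i * h i x)"
      by (rule sum.reindex_bij_betw[OF b])
    then show "f x = (\<Sum>i<card S. lam (b i) * h (b i) x)" using S(4) by (simp add: atLeast0LessThan)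
  qed
  show "f \<in> posi B" unfolding posi_def
    by (rule CollectI, rule exI[of _ "card S"], rule conjI[OF m], rule exI[of _ "lam \<circ> b"], rule exI[of _ "h \<circ> b"])
       (use p e in simp)
qed

lemma posi_mono: "A \<subseteq> B \<Longrightarrow> posi A \<subseteq> posi B"
  unfolding posi_def by blast

lemma Ext_mono: "A \<subseteq> B \<Longrightarrow> Ext A \<subseteq> Ext B"
  unfolding Ext_def by (rule posi_mono) blast

lemma posi_single: "g \<in> B \<Longrightarrow> g \<in> posi B"
  unfolding posi_def
  by (intro CollectI exI[of _ 1] conjI exI[of _ "\<lambda>_. 1::real"] exI[of _ "\<lambda>_. g"]) auto

lemma posi_scale: "f \<in> posi B \<Longrightarrow> c > 0 \<Longrightarrow> (\<lambda>x. c * f x) \<in> posi B"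
proof -
  assume "f \<in> posi B" "c > 0"
  then obtain m :: nat and lam h where "m \<ge> 1" "\<forall>i<m. lam i > (0::real) \<and> h i \<in> B" "f = (\<lambda>x. \<Sum>i<m. lam i * h i x)"
    unfolding posi_def by blast
  then show ?thesis unfolding posi_def using \<open>c > 0\<close>
    by (intro CollectI exI[of _ m] conjI exI[of _ "\<lambda>i. c * lam i"] exI[of _ h])
       (auto simp: sum_distrib_left mult.assoc)
qed

lemma posi_add: "f \<in> posi B \<Longrightarrow> g \<in> posi B \<Longrightarrow> (\<lambda>x. f x + g x) \<in> posi B"
proof -
  assume "f \<in> posi B" "g \<in> posi B"
  then obtain m1 m2 :: nat and lam1 h1 lam2 h2 where
    1: "m1 \<ge> 1" "\<forall>i<m1. lam1 i > (0::real) \<and> h1 i \<in> B" "f = (\<lambda>x. \<Sum>i<m1. lam1 i * h1 i x)" and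
    2: "m2 \<ge> 1" "\<forall>i<m2. lam2 i > (0::real) \<and> h2 i \<in> B" "g = (\<lambda>x. \<Sum>i<m2. lam2 i * h2 i x)"
    unfolding posi_def by blast
  define lam where "lam i = (if i < m1 then lam1 i else lam2 (i - m1))" for i
  define h where "h i = (if i < m1 then h1 i else h2 (i - m1))" for i
  let ?S = "{..<m1} \<union> (\<lambda>i. i + m1) ` {..<m2}"
  have "finite ?S" "?S \<noteq> {}" using 1 lessThan_empty_iff[of m1] by auto
  moreover have "\<forall>i\<in>?S. lam i > 0 \<and> h i \<in> B" using 1 2 by (auto simp: lam_def h_def)
  moreover have "(\<lambda>x. f x + g x) = (\<lambda>x. \<Sum>i\<in>?S. lam i * h i x)"
  proof
    fix x
    have "(\<Sum>i\<in>?S. lam i * h i x) = (\<Sum>i<m1. lam i * h i x) + (\<Sum>i\<in>(\<lambda>i. i + m1) ` {..<m2}. lam i * h i x)"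
      by (rule sum.union_disjoint) auto
    also have "(\<Sum>i\<in>(\<lambda>i. i + m1) ` {..<m2}. lam i * h i x) = (\<Sum>i<m2. lam (i+m1) * h (i+m1) x)"
      by (subst sum.reindex) (auto simp: inj_on_def)
    also have "(\<Sum>i<m1. lam i * h i x) = f x" unfolding 1(3)
      by (rule sum.cong) (auto simp: lam_def h_def)
    also have "(\<Sum>i<m2. lam (i+m1) * h (i+m1) x) = g x" unfolding 2(3)
      by (rule sum.cong) (auto simp: lam_def h_def)
    finally show "f x + g x = (\<Sum>i\<in>?S. lam i * h i x)" by simp
  qed
  ultimately have "finite ?S \<and> ?S \<noteq> {} \<and> ((\<forall>i\<in>?S. lam i > 0 \<and> h i \<in> B) \<and> (\<lambda>x. f x + g x) = (\<lambda>x. \<Sum>i\<in>?S. lam i * h i x))"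
    by (intro conjI)
  then show ?thesis unfolding posi_iff
    apply (intro exI[of _ ?S])
    apply (elim conjE)
    apply (intro conjI, assumption, assumption)
    apply (rule exI[of _ lam], rule exI[of _ h])
    apply (intro conjI; assumption)
    done
qed

lemma posi_gambles: "B \<subseteq> gambles \<Longrightarrow> posi B \<subseteq> gambles"
  unfolding posi_def gambles_def
proof clarify
  fix m :: nat and lam :: "nat \<Rightarrow> real" and h assume "B \<subseteq> Collect gamble" "\<forall>i<m. 0 < lam i \<and> h i \<in> B"
  then show "gamble (\<lambda>x. \<Sum>i<m. lam i * h i x)" by (intro gamble_sum) auto
qed

lemma gneq0_gambles: "gneq0 \<subseteq> gambles" unfolding gneq0_def gambles_def by auto

lemma posi_gneq0: "posi gneq0 \<subseteq> gneq0"
proof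
  fix f assume "f \<in> posi gneq0"
  then obtain m :: nat and lam h where m: "m \<ge> 1" "\<forall>i<m. lam i > (0::real) \<and> h i \<in> gneq0" "f = (\<lambda>x. \<Sum>i<m. lam i * h i x)"
    unfolding posi_def by blast
  have g: "gamble f" using posi_gambles[OF gneq0_gambles] \<open>f \<in> posi gneq0\<close> by (auto simp: gambles_def)
  have nn: "\<forall>i<m. \<forall>x. lam i * h i x \<ge> 0" using m(2) by (auto simp: gneq0_def)
  have "\<forall>x. f x \<ge> 0" using m(3) nn by (auto intro: sum_nonneg)
  moreover have "f \<noteq> (\<lambda>x. 0)"
  proof -
    have "h 0 \<in> gneq0" "lam 0 > 0" using m by auto
    then obtain x where x: "h 0 x \<noteq> 0" "h 0 x \<ge> 0" unfolding gneq0_def by fastforce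
    then have "lam 0 * h 0 x > 0" using \<open>lam 0 > 0\<close> by simp
    also have "lam 0 * h 0 x \<le> (\<Sum>i<m. lam i * h i x)"
      by (rule member_le_sum[of 0 "{..<m}" "\<lambda>i. lam i * h i x"]) (use m nn in auto)
    finally show ?thesis using m(3) by (metis less_irrefl)
  qed
  ultimately show "f \<in> gneq0" using g unfolding gneq0_def by auto
qed

lemma ext_split:
  assumes "f \<in> Ext E"
  shows "f \<in> gneq0 \<or> (\<exists>p\<in>posi E. \<forall>x. p x \<le> f x)"
proof -
  obtain m :: nat and lam h where m: "m \<ge> 1" "\<forall>i<m. lam i > (0::real) \<and> h i \<in> E \<union> gneq0" "f = (\<lambda>x. \<Sum>i<m. lam i * h i x)"
    using assms unfolding Ext_def posi_def by blast
  define I where "I = {i. i < m \<and> h i \<in> E}"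
  show ?thesis
  proof (cases "I = {}")
    case True
    then have "\<forall>i<m. lam i > 0 \<and> h i \<in> gneq0" using m(2) by (auto simp: I_def)
    then have "f \<in> posi gneq0" unfolding posi_def using m by blast
    then show ?thesis using posi_gneq0 by blast
  next
    case False
    have fI: "finite I" by (simp add: I_def)
    let ?p = "\<lambda>x. \<Sum>i\<in>I. lam i * h i x"
    have "?p \<in> posi E" unfolding posi_iff using False fI m(2)
      by (intro exI[of _ I] conjI exI[of _ lam] exI[of _ h]) (auto simp: I_def)
    moreover have "\<forall>x. ?p x \<le> f x"
    proof
      fix x
      have "\<forall>i\<in>{..<m} - I. 0 \<le> lam i * h i x" using m(2) by (auto simp: I_def gneq0_def)
      then show "?p x \<le> f x" unfolding m(3)
        by (intro sum_mono2) (auto simp: I_def)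
    qed
    ultimately show ?thesis by (intro disjI2 bexI[of _ ?p]) simp_all
  qed
qed

lemma Ext_coherent:
  assumes "E \<subseteq> gambles" "(\<lambda>x. 0) \<notin> Ext E"
  shows "coherent_D (Ext E)"
  unfolding coherent_D_def
proof (intro conjI ballI allI impI)
  show "Ext E \<subseteq> gambles" unfolding Ext_def using assms(1) gneq0_gambles by (intro posi_gambles) auto
  show "(\<lambda>x. 0) \<notin> Ext E" by fact
  show "gneq0 \<subseteq> Ext E" unfolding Ext_def using posi_single by blast
  show "\<And>g lam. g \<in> Ext E \<Longrightarrow> 0 < lam \<Longrightarrow> (\<lambda>x. lam * g x) \<in> Ext E"
    unfolding Ext_def by (rule posi_scale)
  show "\<And>f g. f \<in> Ext E \<Longrightarrow> g \<in> Ext E \<Longrightarrow> (\<lambda>x. f x + g x) \<in> Ext E"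
    unfolding Ext_def by (rule posi_add)
qed


lemma zero_not_gneq0: "(\<lambda>x. 0) \<notin> gneq0" unfolding gneq0_def by auto

lemma cK1: "coherent_K K \<Longrightarrow> K \<subseteq> Pow gambles"
  by (unfold coherent_K_def, elim conjE, assumption)
lemma K_empty: "coherent_K K \<Longrightarrow> {} \<notin> K"
  by (unfold coherent_K_def, elim conjE, assumption)
lemma cK3: "coherent_K K \<Longrightarrow> \<forall>A\<in>K. A - {\<lambda>x. 0} \<in> K"
  by (unfold coherent_K_def, elim conjE, assumption)
lemma cK4: "coherent_K K \<Longrightarrow> \<forall>g\<in>gneq0. {g} \<in> K"
  by (unfold coherent_K_def, elim conjE, assumption)
lemma cK5: "coherent_K K \<Longrightarrow> \<forall>A\<in>K. \<forall>B. A \<subseteq> B \<and> B \<subseteq> gambles \<longrightarrow> B \<in> K"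
  by (unfold coherent_K_def, elim conjE, assumption)
lemma cK6: "coherent_K K \<Longrightarrow> \<forall>A\<in>K. \<forall>f. (\<forall>g\<in>A. gamble (f g) \<and> (\<forall>x. f g x \<ge> g x)) \<longrightarrow> f ` A \<in> K"
  by (unfold coherent_K_def, elim conjE, assumption)
lemma cK7: "coherent_K (K :: ('a \<Rightarrow> real) set set) \<Longrightarrow> (\<forall>n::nat. \<forall>As::nat \<Rightarrow> ('a \<Rightarrow> real) set. \<forall>F::(nat \<Rightarrow> 'a \<Rightarrow> real) \<Rightarrow> ('a \<Rightarrow> real).
        n \<ge> 1 \<and> (\<forall>i<n. As i \<in> K)
        \<and> (\<forall>g\<in>PiE {..<n} As. F g \<in> posi (g ` {..<n}))
        \<longrightarrow> F ` (PiE {..<n} As) \<in> K)"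
  by (unfold coherent_K_def, elim conjE, assumption)

lemma PiE_gambles:
  fixes n :: nat
  assumes "coherent_K K" "\<forall>i<n. As i \<in> K" "g \<in> PiE {..<n} As"
  shows "g ` {..<n} \<subseteq> gambles"
  using cK1[OF assms(1)] assms(2,3) by (auto simp: PiE_iff)

lemma PiE_ne:
  fixes n :: nat
  assumes "coherent_K K" "\<forall>i<n. As i \<in> K"
  shows "PiE {..<n} As \<noteq> {}"
  using K_empty[OF assms(1)] assms(2) by (auto simp: PiE_eq_empty_iff)

lemma K_add:
  fixes n :: nat
  assumes "coherent_K K" "n \<ge> 1" "\<forall>i<n. As i \<in> K" "\<forall>g\<in>PiE {..<n} As. F g \<in> posi (g ` {..<n})"
  shows "F ` (PiE {..<n} As) \<in> K"
  using cK7[OF assms(1)] assms(2-4) by blast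

lemma K_dom:
  assumes "coherent_K K" "A \<in> K" "\<forall>g\<in>A. gamble (f g) \<and> (\<forall>x. f g x \<ge> g x)"
  shows "f ` A \<in> K"
  using cK6[OF assms(1)] assms(2-3) by blast

lemma K_0: "coherent_K K \<Longrightarrow> A \<in> K \<Longrightarrow> A - {\<lambda>x. 0} \<in> K"
  using cK3 by blast

lemma K_sup: "coherent_K K \<Longrightarrow> A \<in> K \<Longrightarrow> A \<subseteq> B \<Longrightarrow> B \<subseteq> gambles \<Longrightarrow> B \<in> K"
  using cK5 by blast

lemma K_gneq0: "coherent_K K \<Longrightarrow> g \<in> gneq0 \<Longrightarrow> {g} \<in> K"
  using cK4 by blast

lemma exists_good:
  fixes n :: nat and K :: "('a \<Rightarrow> real) set set"
  assumes K: "coherent_K K" and n: "n \<ge> 1" and As: "\<forall>i<n. As i \<in> K"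
  shows "\<exists>g\<in>PiE {..<n} As. (\<lambda>x. 0) \<notin> Ext (g ` {..<n})"
proof (rule ccontr)
  assume "\<not> ?thesis"
  then have all: "\<forall>g\<in>PiE {..<n} As. (\<lambda>x. 0) \<in> Ext (g ` {..<n})" by blast
  define F where "F g = (SOME p. p \<in> posi (g ` {..<n}) \<and> (\<forall>x. p x \<le> 0))" for g :: "nat \<Rightarrow> 'a \<Rightarrow> real"
  have F: "F g \<in> posi (g ` {..<n}) \<and> (\<forall>x. F g x \<le> 0)" if "g \<in> PiE {..<n} As" for g
  proof -
    have "\<exists>p. p \<in> posi (g ` {..<n}) \<and> (\<forall>x. p x \<le> 0)"
      using ext_split[OF all[rule_format, OF that]] zero_not_gneq0 by blast
    then show ?thesis unfolding F_def by (rule someI_ex)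
  qed
  have 1: "F ` PiE {..<n} As \<in> K" using K_add[OF K n As] F by blast
  have 2: "(\<lambda>_. (\<lambda>x. 0::real)) ` (F ` PiE {..<n} As) \<in> K"
    by (rule K_dom[OF K 1]) (use F gamble_zero in auto)
  have eq: "(\<lambda>_. (\<lambda>x. 0::real)) ` (F ` PiE {..<n} As) = {\<lambda>x. 0}"
    using PiE_ne[OF K As] by auto
  have "{\<lambda>x. 0::real} \<in> K" using 2 by (simp only: eq)
  from K_0[OF K this] K_empty[OF K] show False by simp
qed

lemma DD_ne:
  assumes K: "coherent_K K" and n: "n \<ge> 1" and As: "\<forall>i<n. As i \<in> K"
  shows "DD n As \<noteq> {}"
proof -
  obtain g where g: "g \<in> PiE {..<n} As" "(\<lambda>x. 0) \<notin> Ext (g ` {..<n})"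
    using exists_good[OF assms] by blast
  have "coherent_D (Ext (g ` {..<n}))"
    by (rule Ext_coherent[OF PiE_gambles[OF K As g(1)] g(2)])
  then have "Ext (g ` {..<n}) \<in> DD n As" unfolding DD_def using g by blast
  then show ?thesis by blast
qed

lemma DD_concat:
  "DD (n1 + n2) (concat_fam n1 A1 A2) \<subseteq> DD n1 A1 \<inter> DD n2 A2"
proof
  fix D assume "D \<in> DD (n1 + n2) (concat_fam n1 A1 A2)"
  then obtain g where D: "coherent_D D" "g \<in> PiE {..<n1+n2} (concat_fam n1 A1 A2)"
    "(\<lambda>x. 0) \<notin> Ext (g ` {..<n1+n2})" "Ext (g ` {..<n1+n2}) \<subseteq> D"
    unfolding DD_def by blast
  define g1 where "g1 = restrict g {..<n1}"
  define g2 where "g2 = (\<lambda>i. if i < n2 then g (i + n1) else undefined)"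
  have gi: "g i \<in> concat_fam n1 A1 A2 i" if "i < n1 + n2" for i
    using D(2) that by (auto simp: PiE_iff)
  have "g i \<in> A1 i" if "i < n1" for i using gi[of i] that by (simp add: concat_fam_def)
  then have g1: "g1 \<in> PiE {..<n1} A1" unfolding g1_def by (auto simp: PiE_iff)
  have "g (i + n1) \<in> A2 i" if "i < n2" for i using gi[of "i + n1"] that by (simp add: concat_fam_def)
  then have g2: "g2 \<in> PiE {..<n2} A2" unfolding g2_def
    by (auto simp: PiE_iff extensional_def)
  have s1: "g1 ` {..<n1} \<subseteq> g ` {..<n1+n2}" unfolding g1_def by auto
  have s2: "g2 ` {..<n2} \<subseteq> g ` {..<n1+n2}" unfolding g2_def by auto
  have "D \<in> DD n1 A1" unfolding DD_def using D Ext_mono[OF s1] g1 by blast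
  moreover have "D \<in> DD n2 A2" unfolding DD_def using D Ext_mono[OF s2] g2 by blast
  ultimately show "D \<in> DD n1 A1 \<inter> DD n2 A2" by blast
qed

lemma concat_K:
  assumes "\<forall>i<n1. A1 i \<in> K" "\<forall>i<n2. A2 i \<in> K"
  shows "\<forall>i<n1+n2. concat_fam n1 A1 A2 i \<in> K"
  using assms unfolding concat_fam_def by auto

lemma K_sub_Kof:
  assumes K: "coherent_K K" and A: "A \<in> K"
  shows "A \<in> K_of (frakD K)"
proof -
  have Ag: "A \<subseteq> gambles" using cK1[OF K] A by blast
  have mem: "DD 1 (\<lambda>_. A) \<in> frakD K" unfolding frakD_def using A
    by (intro CollectI exI[of _ "1::nat"] exI[of _ "\<lambda>_::nat. A"]) simp
  have "\<forall>D\<in>DD 1 (\<lambda>_. A). A \<inter> D \<noteq> {}"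
  proof
    fix D assume "D \<in> DD 1 (\<lambda>_. A)"
    then obtain g where g: "g \<in> PiE {..<1::nat} (\<lambda>_. A)" "Ext (g ` {..<1::nat}) \<subseteq> D"
      unfolding DD_def by blast
    have "g 0 \<in> A" using g(1) by (auto simp: PiE_iff)
    moreover have "g 0 \<in> Ext (g ` {..<1::nat})" unfolding Ext_def by (rule posi_single) auto
    ultimately show "A \<inter> D \<noteq> {}" using g(2) by blast
  qed
  then show ?thesis unfolding K_of_def using Ag mem by blast
qed

lemma Kof_sub_K:
  fixes K :: "('a \<Rightarrow> real) set set"
  assumes K: "coherent_K K" and B: "B \<in> K_of (frakD K)"
  shows "B \<in> K"
proof -
  obtain n As where Bg: "B \<subseteq> gambles" and n: "n \<ge> 1" and As: "\<forall>i<n. As i \<in> K"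
    and meet: "\<forall>D\<in>DD n As. B \<inter> D \<noteq> {}"
    using B unfolding K_of_def frakD_def by blast
  show ?thesis
  proof (cases "B \<inter> gneq0 = {}")
    case False
    then obtain h where "h \<in> B" "h \<in> gneq0" by blast
    then show ?thesis using K_sup[OF K K_gneq0[OF K \<open>h \<in> gneq0\<close>] _ Bg] by blast
  next
    case True
    define P where "P g p \<longleftrightarrow> p \<in> posi (g ` {..<n}) \<and> ((\<forall>x. p x \<le> 0) \<or> (\<exists>b\<in>B. \<forall>x. p x \<le> b x))" for g :: "nat \<Rightarrow> 'a \<Rightarrow> real" and p
    define F where "F g = (SOME p. P g p)" for g :: "nat \<Rightarrow> 'a \<Rightarrow> real"
    have F: "P g (F g)" if g: "g \<in> PiE {..<n} As" for g
    proof -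
      have "\<exists>p. P g p"
      proof (cases "(\<lambda>x. 0) \<in> Ext (g ` {..<n})")
        case True
        then show ?thesis using ext_split[OF True] zero_not_gneq0 unfolding P_def by blast
      next
        case False
        have "coherent_D (Ext (g ` {..<n}))"
          by (rule Ext_coherent[OF PiE_gambles[OF K As g] False])
        then have "Ext (g ` {..<n}) \<in> DD n As" unfolding DD_def using g False by blast
        then obtain b where b: "b \<in> B" "b \<in> Ext (g ` {..<n})" using meet by blast
        then have "b \<notin> gneq0" using True by blast
        then obtain p where "p \<in> posi (g ` {..<n})" "\<forall>x. p x \<le> b x" using ext_split[OF b(2)] by blast
        then show ?thesis unfolding P_def using b(1) by blast
      qed
      then show ?thesis unfolding F_def by (rule someI_ex)
    qed
    have 1: "F ` PiE {..<n} As \<in> K" using K_add[OF K n As] F unfolding P_def by blast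
    define \<phi> where "\<phi> s = (if \<exists>b\<in>B. \<forall>x. s x \<le> b x then SOME b. b \<in> B \<and> (\<forall>x. s x \<le> b x) else (\<lambda>x. 0))" for s :: "'a \<Rightarrow> real"
    have \<phi>: "(\<phi> s \<in> B \<and> (\<forall>x. s x \<le> \<phi> s x)) \<or> (\<phi> s = (\<lambda>x. 0) \<and> (\<forall>x. s x \<le> 0))"
      if "s \<in> F ` PiE {..<n} As" for s
    proof (cases "\<exists>b\<in>B. \<forall>x. s x \<le> b x")
      case True
      then have "\<exists>b. b \<in> B \<and> (\<forall>x. s x \<le> b x)" by blast
      from someI_ex[OF this] show ?thesis unfolding \<phi>_def using True by simp
    next
      case False
      from that obtain g where "g \<in> PiE {..<n} As" "s = F g" by blast
      then have "P g s" using F by blast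
      then show ?thesis unfolding \<phi>_def P_def using False by auto
    qed
    have 2: "\<phi> ` (F ` PiE {..<n} As) \<in> K"
    proof (rule K_dom[OF K 1], intro ballI conjI)
      fix s assume s: "s \<in> F ` PiE {..<n} As"
      show "gamble (\<phi> s)" using \<phi>[OF s] Bg gamble_zero by (auto simp: gambles_def)
      show "\<forall>x. s x \<le> \<phi> s x" using \<phi>[OF s] by auto
    qed
    have 3: "\<phi> ` (F ` PiE {..<n} As) - {\<lambda>x. 0} \<subseteq> B" using \<phi> by blast
    show ?thesis by (rule K_sup[OF K K_0[OF K 2] 3 Bg])
  qed
qed

theorem mainTheorem9:
  fixes K :: "('a \<Rightarrow> real) set set"
  assumes "coherent_K K"
  shows "frakD K \<noteq> {}
    \<and> (\<forall>DS\<in>frakD K. DS \<noteq> {} \<and> (\<forall>D\<in>DS. coherent_D D))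
    \<and> (\<forall>n1 n2 (A1::nat \<Rightarrow> ('a \<Rightarrow> real) set) A2.
          n1 \<ge> 1 \<and> n2 \<ge> 1 \<and> (\<forall>i<n1. A1 i \<in> K) \<and> (\<forall>i<n2. A2 i \<in> K)
          \<longrightarrow> DD (n1 + n2) (concat_fam n1 A1 A2) \<subseteq> DD n1 A1 \<inter> DD n2 A2)
    \<and> downwards_closed (frakD K)
    \<and> K = K_of (frakD K)"
proof (intro conjI)
  have "(\<lambda>x::'a. 1::real) \<in> gneq0" unfolding gneq0_def gamble_def by (auto simp: fun_eq_iff)
  then have "{\<lambda>x::'a. 1::real} \<in> K" by (rule K_gneq0[OF assms])
  then have "DD 1 (\<lambda>_. {\<lambda>x::'a. 1::real}) \<in> frakD K" unfolding frakD_def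
    by (intro CollectI exI[of _ "1::nat"] exI[of _ "\<lambda>_::nat. {\<lambda>x::'a. 1::real}"]) auto
  then show "frakD K \<noteq> {}" by auto
  show "\<forall>DS\<in>frakD K. DS \<noteq> {} \<and> (\<forall>D\<in>DS. coherent_D D)"
  proof
    fix DS assume "DS \<in> frakD K"
    then obtain n :: nat and As where d: "DS = DD n As" "n \<ge> 1" "\<forall>i<n. As i \<in> K"
      unfolding frakD_def by blast
    have "\<forall>D\<in>DD n As. coherent_D D" unfolding DD_def by blast
    then show "DS \<noteq> {} \<and> (\<forall>D\<in>DS. coherent_D D)"
      using DD_ne[OF assms d(2,3)] d(1) by simp
  qed
  show "\<forall>n1 n2 (A1::nat \<Rightarrow> ('a \<Rightarrow> real) set) A2.
          n1 \<ge> 1 \<and> n2 \<ge> 1 \<and> (\<forall>i<n1. A1 i \<in> K) \<and> (\<forall>i<n2. A2 i \<in> K)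
          \<longrightarrow> DD (n1 + n2) (concat_fam n1 A1 A2) \<subseteq> DD n1 A1 \<inter> DD n2 A2"
    by (intro allI impI) (rule DD_concat)
  show "downwards_closed (frakD K)"
    unfolding downwards_closed_def
  proof (intro ballI)
    fix D1 D2 assume "D1 \<in> frakD K" "D2 \<in> frakD K"
    obtain n1 :: nat and A1 where d1: "D1 = DD n1 A1" "n1 \<ge> 1" "\<forall>i<n1. A1 i \<in> K"
      using \<open>D1 \<in> frakD K\<close> unfolding frakD_def by blast
    obtain n2 :: nat and A2 where d2: "D2 = DD n2 A2" "n2 \<ge> 1" "\<forall>i<n2. A2 i \<in> K"
      using \<open>D2 \<in> frakD K\<close> unfolding frakD_def by blast
    have "DD (n1 + n2) (concat_fam n1 A1 A2) \<in> frakD K"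
      unfolding frakD_def using d1 d2 concat_K[OF d1(3) d2(3)]
      by (intro CollectI exI[of _ "n1 + n2"] exI[of _ "concat_fam n1 A1 A2"]) auto
    moreover have "DD (n1 + n2) (concat_fam n1 A1 A2) \<subseteq> D1 \<inter> D2"
      using DD_concat d1(1) d2(1) by simp
    ultimately show "\<exists>D\<in>frakD K. D \<subseteq> D1 \<inter> D2" by (rule bexI[rotated])
  qed
  show "K = K_of (frakD K)"
  proof (intro equalityI subsetI)
    fix A assume "A \<in> K" then show "A \<in> K_of (frakD K)" by (rule K_sub_Kof[OF assms])
  next
    fix A assume "A \<in> K_of (frakD K)" then show "A \<in> K" by (rule Kof_sub_K[OF assms])
  qed
qed

end
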